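(* Let $((T_\infty,\ell),\eta)$ have law $\mu\otimes\mathcal B(1/2)$ and let $Q_\infty=\Phi((T_\infty,\ell),\eta)$. Let $r>0$ be an integer and let $v\in V(Q_\infty)$. Then: 1. $v\in F_{-r}(Q_\infty)$ if and only if $\ell(v')>-r$ for every $v'\in[[\varnothing,v]]$; 2. $v\in\partial F_{-r}(Q_\infty)$ if and only if $\ell(v)=-r$ and $\ell(v')>-r$ for every $v'\in[[\varnothing,v]]\setminus\{v\}$. Here $[[\varnothing,v]]$ denotes the set of vertices on the geodesic path from $\varnothing$ to $v$ in the tree $T_\infty$.
   Context: **The law $\mu$.** $\rho_l$ is the law of a Galton–Watson plane tree with offspring law $P(k)=2^{-k-1}$, root label $l$, and each non-root vertex labeled by its parent's label plus an independent uniform element of $\{-1,0,1\}$. $\mu$ is the law of $(T_\infty,\ell)$, which has a spine $\varnothing=S(0),S(1),\dots$ whose labels $X_n$ form a random walk from 0 with i.i.d. uniform steps in $\{-1,0,1\}$. Conditionally on $(X_n)$, independent trees with law $\rho_{X_n}$ are grafted to the left and to the right of each $S(n)$. **The Schaeffer map $\Phi$.** Corners are indexed by $\mathbb Z$: $c_0,c_1,\dots$ are the left-side corners in clockwise contour order from the root corner $c_0$, and negative indices are the right-side corners in counterclockwise order. The successor of $c_i$ is the first $c_j$, $j>i$, with label $\ell(c_i)-1$. $\Phi$ gives the quadrangulation with vertex set $V(T_\infty)$ made of arcs from corners to successors. It is rooted at the arc from $c_0$ to its successor, with orientation reversed iff $\eta=1$. **The augmented graph $\hat Q_\infty$.** It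 is obtained from $Q_\infty$ as follows: - in each face whose vertices in clockwise order have labels $l,l+1,l,l+1$, add an edge between the two vertices labeled $l+1$; - in each face with labels $l,l+1,l+2,l+1$, double the edge between the last two vertices. **The sets $F_{-r}$ and $\partial F_{-r}$.** $F_{-r}(Q_\infty)$ is the vertex set of the connected component containing $\varnothing$ of the subgraph of $\hat Q_\infty$ induced by $\{v:\ell(v)>-r\}$. $\partial F_{-r}(Q_\infty)$ is the set of vertices $v$ with $\ell(v)\le-r$ joined by an edge of $\hat Q_\infty$ to a vertex of $F_{-r}(Q_\infty)$. *)

theory Defs
  imports Main "HOL-Library.Stream"
begin

datatype ptree = Node "ptree list"

text \<open>Vertices of a finite plane tree are Ulam--Harris words (paths from the root).\<close>
fun paths :: "ptree \<Rightarrow> nat list list"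
  and paths_list :: "nat \<Rightarrow> ptree list \<Rightarrow> nat list list" where
  "paths (Node ts) = [] # paths_list 0 ts"
| "paths_list i [] = []"
| "paths_list i (t # ts) = map (Cons i) (paths t) @ paths_list (Suc i) ts"

text \<open>Clockwise contour sequence of corners of a finite plane tree, starting and
  ending at the root (each entry is the vertex of the corner).\<close>
fun contour :: "ptree \<Rightarrow> nat list list"
  and contour_list :: "nat \<Rightarrow> ptree list \<Rightarrow> nat list list" where
  "contour (Node ts) = [] # contour_list 0 ts"
| "contour_list i [] = []"
| "contour_list i (t # ts) = map (Cons i) (contour t) @ [[]] @ contour_list (Suc i) ts"

text \<open>The tree is given by the finite plane trees L n (grafted to the left of the
  spine vertex S(n)) and R n (grafted to the right of S(n)).  A vertex is either a
  spine vertex S(n) or a non-root vertex of one of the grafted trees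
  (True = left, False = right).\<close>
datatype vtx = Spine nat | Off nat bool "nat list"

definition graft :: "(nat \<Rightarrow> ptree) \<Rightarrow> (nat \<Rightarrow> ptree) \<Rightarrow> nat \<Rightarrow> bool \<Rightarrow> ptree" where
  "graft L R n s = (if s then L n else R n)"

definition embed :: "nat \<Rightarrow> bool \<Rightarrow> nat list \<Rightarrow> vtx" where
  "embed n s p = (if p = [] then Spine n else Off n s p)"

definition verts :: "(nat \<Rightarrow> ptree) \<Rightarrow> (nat \<Rightarrow> ptree) \<Rightarrow> vtx set" where
  "verts L R = range Spine \<union>
     {Off n s p | n s p. p \<noteq> [] \<and> p \<in> set (paths (graft L R n s))}"

definition tedge :: "(nat \<Rightarrow> ptree) \<Rightarrow> (nat \<Rightarrow> ptree) \<Rightarrow> vtx \<Rightarrow> vtx \<Rightarrow> bool" where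
  "tedge L R u w \<longleftrightarrow>
     (\<exists>n. u = Spine n \<and> w = Spine (Suc n)) \<or>
     (\<exists>n s p i. u = embed n s p \<and> w = Off n s (p @ [i]) \<and>
                p @ [i] \<in> set (paths (graft L R n s)))"

text \<open>The vertices of the geodesic [[root, v]] in T_infinity (root = Spine 0).\<close>
definition geod :: "vtx \<Rightarrow> vtx set" where
  "geod v = (case v of
      Spine n \<Rightarrow> {Spine k | k. k \<le> n}
    | Off n s p \<Rightarrow> {Spine k | k. k \<le> n} \<union> {embed n s q | q. (\<exists>t. p = q @ t)})"

text \<open>Left-side corners c_0, c_1, ... in clockwise contour order from the root corner c_0.\<close>
definition leftc :: "(nat \<Rightarrow> ptree) \<Rightarrow> vtx stream" where
  "leftc L = flat (smap (\<lambda>n. map (embed n True) (contour (L n))) nats)"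

text \<open>Right-side corners c_{-1}, c_{-2}, ... in counterclockwise contour order from c_0
  (the first root corner in the list is c_0 itself and is dropped).\<close>
definition rightc :: "(nat \<Rightarrow> ptree) \<Rightarrow> vtx stream" where
  "rightc R = stl (flat (smap (\<lambda>n. map (embed n False) (rev (contour (R n)))) nats))"

definition corner :: "(nat \<Rightarrow> ptree) \<Rightarrow> (nat \<Rightarrow> ptree) \<Rightarrow> int \<Rightarrow> vtx" where
  "corner L R i = (if 0 \<le> i then leftc L !! nat i else rightc R !! nat (- i - 1))"

definition succ :: "(nat \<Rightarrow> ptree) \<Rightarrow> (nat \<Rightarrow> ptree) \<Rightarrow> (vtx \<Rightarrow> int) \<Rightarrow> int \<Rightarrow> int" where
  "succ L R lab i = (LEAST j. i < j \<and> lab (corner L R j) = lab (corner L R i) - 1)"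

text \<open>Edges of Q_infinity: arcs from each corner to its successor (undirected adjacency;
  the root edge and its orientation eta do not affect the vertex/edge sets).\<close>
definition Qadj :: "(nat \<Rightarrow> ptree) \<Rightarrow> (nat \<Rightarrow> ptree) \<Rightarrow> (vtx \<Rightarrow> int) \<Rightarrow> vtx \<Rightarrow> vtx \<Rightarrow> bool" where
  "Qadj L R lab u w \<longleftrightarrow>
     (\<exists>i. (u = corner L R i \<and> w = corner L R (succ L R lab i)) \<or>
          (w = corner L R i \<and> u = corner L R (succ L R lab i)))"

text \<open>Each face contains exactly one tree edge; the tree edge is
  traversed by the contour at the steps p \<rightarrow> p+1 and q \<rightarrow> q+1 (p < q, in opposite
  directions).  The face is the 4-cycle of vertices described by the Schaeffer
  construction (listed in cyclic order).\<close>
definition face :: "(nat \<Rightarrow> ptree) \<Rightarrow> (nat \<Rightarrow> ptree) \<Rightarrow> (vtx \<Rightarrow> int) \<Rightarrow> int \<Rightarrow> int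
                      \<Rightarrow> vtx \<times> vtx \<times> vtx \<times> vtx" where
  "face L R lab p q =
    (let c = corner L R; s = succ L R lab; a = lab (c p); b = lab (c (p + 1)) in
     if a = b then (c p, c (s p), c (p + 1), c (s q))
     else if b = a + 1 then (c p, c (s p), c (s (p + 1)), c (p + 1))
     else (c (q + 1), c (s (q + 1)), c (s q), c q))"

definition is_face :: "(nat \<Rightarrow> ptree) \<Rightarrow> (nat \<Rightarrow> ptree) \<Rightarrow> (vtx \<Rightarrow> int)
                         \<Rightarrow> vtx \<times> vtx \<times> vtx \<times> vtx \<Rightarrow> bool" where
  "is_face L R lab f \<longleftrightarrow>
     (\<exists>p q. p < q \<and> corner L R (p + 1) = corner L R q \<and> corner L R (q + 1) = corner L R p \<and>
            (tedge L R (corner L R p) (corner L R (p + 1)) \<or>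
             tedge L R (corner L R (p + 1)) (corner L R p)) \<and>
            f = face L R lab p q)"

text \<open>Edges added inside faces whose labels read l, l+1, l, l+1 cyclically: an edge
  between the two vertices labelled l+1.  (Doubling an edge in faces of type
  l, l+1, l+2, l+1 does not change adjacency, so it is not recorded.)\<close>
definition added_edge :: "(vtx \<Rightarrow> int) \<Rightarrow> vtx \<times> vtx \<times> vtx \<times> vtx \<Rightarrow> vtx \<Rightarrow> vtx \<Rightarrow> bool" where
  "added_edge lab f u w \<longleftrightarrow>
     (case f of (v1, v2, v3, v4) \<Rightarrow>
       (\<exists>l. (lab v1 = l \<and> lab v2 = l + 1 \<and> lab v3 = l \<and> lab v4 = l + 1 \<and>
              ({u, w} = {v2, v4})) \<or>
            (lab v1 = l + 1 \<and> lab v2 = l \<and> lab v3 = l + 1 \<and> lab v4 = l \<and>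
              ({u, w} = {v1, v3}))))"

definition hatQadj :: "(nat \<Rightarrow> ptree) \<Rightarrow> (nat \<Rightarrow> ptree) \<Rightarrow> (vtx \<Rightarrow> int) \<Rightarrow> vtx \<Rightarrow> vtx \<Rightarrow> bool" where
  "hatQadj L R lab u w \<longleftrightarrow>
     Qadj L R lab u w \<or> (\<exists>f. is_face L R lab f \<and> added_edge lab f u w)"

definition Fset :: "(nat \<Rightarrow> ptree) \<Rightarrow> (nat \<Rightarrow> ptree) \<Rightarrow> (vtx \<Rightarrow> int) \<Rightarrow> int \<Rightarrow> vtx set" where
  "Fset L R lab r =
     {v. (\<lambda>x y. hatQadj L R lab x y \<and> x \<in> verts L R \<and> y \<in> verts L R \<and>
               lab x > - r \<and> lab y > - r)\<^sup>*\<^sup>* (Spine 0) v \<and>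
         v \<in> verts L R \<and> lab v > - r}"

definition bdF :: "(nat \<Rightarrow> ptree) \<Rightarrow> (nat \<Rightarrow> ptree) \<Rightarrow> (vtx \<Rightarrow> int) \<Rightarrow> int \<Rightarrow> vtx set" where
  "bdF L R lab r =
     {v. v \<in> verts L R \<and> lab v \<le> - r \<and> (\<exists>w \<in> Fset L R lab r. hatQadj L R lab v w)}"

end

theory Submission
  imports Defs "HOL-Library.Stream"
begin

fun adjs :: "'a list \<Rightarrow> ('a \<times> 'a) set" where
  "adjs (x # y # zs) = insert (x, y) (adjs (y # zs))"
| "adjs _ = {}"

lemma adjs_nth: "(x, y) \<in> adjs xs \<longleftrightarrow> (\<exists>j. Suc j < length xs \<and> xs ! j = x \<and> xs ! Suc j = y)"
proof (induction xs rule: adjs.induct)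
  case (1 a b zs)
  show ?case
  proof
    assume "(x, y) \<in> adjs (a # b # zs)"
    then consider "(x,y) = (a,b)" | "(x,y) \<in> adjs (b # zs)" by auto
    then show "\<exists>j. Suc j < length (a # b # zs) \<and> (a # b # zs) ! j = x \<and> (a # b # zs) ! Suc j = y"
    proof cases
      case 1 then show ?thesis by (intro exI[of _ 0]) auto
    next
      case 2 then obtain j where "Suc j < length (b # zs)" "(b # zs) ! j = x" "(b # zs) ! Suc j = y"
        using "1.IH" by blast
      then show ?thesis by (intro exI[of _ "Suc j"]) auto
    qed
  next
    assume "\<exists>j. Suc j < length (a # b # zs) \<and> (a # b # zs) ! j = x \<and> (a # b # zs) ! Suc j = y"
    then obtain j where j: "Suc j < length (a # b # zs)" "(a # b # zs) ! j = x" "(a # b # zs) ! Suc j = y" by blast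
    show "(x, y) \<in> adjs (a # b # zs)"
    proof (cases j)
      case 0 then show ?thesis using j by auto
    next
      case (Suc k) then have "(x,y) \<in> adjs (b # zs)" using "1.IH" j by auto
      then show ?thesis by simp
    qed
  qed
qed auto

lemma adjs_append: "xs \<noteq> [] \<Longrightarrow> ys \<noteq> [] \<Longrightarrow> adjs (xs @ ys) = adjs xs \<union> adjs ys \<union> {(last xs, hd ys)}"
proof (induction xs)
  case (Cons a xs)
  show ?case
  proof (cases xs)
    case Nil then show ?thesis using Cons by (cases ys) auto
  next
    case (Cons b xs') then show ?thesis using Cons.IH Cons.prems by auto
  qed
qed simp

lemma adjs_map: "adjs (map f xs) = (\<lambda>(x,y). (f x, f y)) ` adjs xs"
  by (induction xs rule: adjs.induct) auto

lemma adjs_rev: "adjs (rev xs) = (\<lambda>(x,y). (y, x)) ` adjs xs"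
proof (induction xs rule: adjs.induct)
  case (1 x y zs)
  have e: "rev (x # y # zs) = rev (y # zs) @ [x]" by simp
  have "adjs (rev (x # y # zs)) = adjs (rev (y # zs)) \<union> {(y, x)}"
    unfolding e by (subst adjs_append) (auto simp: last_rev)
  then show ?case using 1 by auto
qed auto

lemma contour_props:
  "contour t \<noteq> [] \<and> hd (contour t) = [] \<and> last (contour t) = []"
  "last ([] # contour_list i ts) = []"
  by (induction t and i ts rule: contour_contour_list.induct) auto

lemma paths_nil: "[] \<in> set (paths t)"
  by (cases t) auto

lemma contour_adj:
  "\<forall>(x,y) \<in> adjs (contour t). (\<exists>k. y = x @ [k] \<and> y \<in> set (paths t)) \<or> (\<exists>k. x = y @ [k] \<and> x \<in> set (paths t))"
  "\<forall>(x,y) \<in> adjs ([] # contour_list i ts). (\<exists>k. y = x @ [k] \<and> y \<in> set (paths_list i ts)) \<or> (\<exists>k. x = y @ [k] \<and> x \<in> set (paths_list i ts))"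
proof (induction t and i ts rule: contour_contour_list.induct)
  case (1 ts)
  then show ?case by auto
next
  case (2 i)
  then show ?case by auto
next
  case (3 i t ts)
  have ne: "contour t \<noteq> []" "hd (contour t) = []" "last (contour t) = []" using contour_props(1) by auto
  have eq: "[] # contour_list i (t # ts) = [[]] @ map (Cons i) (contour t) @ ([] # contour_list (Suc i) ts)"
    by simp
  have "adjs ([] # contour_list i (t # ts)) = {([], [i])} \<union> adjs (map (Cons i) (contour t)) \<union> {([i], [])} \<union> adjs ([] # contour_list (Suc i) ts)"
    unfolding eq using ne
    by (subst adjs_append; simp add: adjs_append hd_map last_map) auto
  then show ?case using 3 paths_nil[of t] by (auto simp: adjs_map)
qed

lemma contour_trav:
  "\<forall>p k. p @ [k] \<in> set (paths t) \<longrightarrow> (p, p @ [k]) \<in> adjs (contour t) \<and> (p @ [k], p) \<in> adjs (contour t)"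
  "\<forall>p k. p @ [k] \<in> set (paths_list i ts) \<longrightarrow> (p, p @ [k]) \<in> adjs ([] # contour_list i ts) \<and> (p @ [k], p) \<in> adjs ([] # contour_list i ts)"
proof (induction t and i ts rule: contour_contour_list.induct)
  case (1 ts)
  then show ?case by auto
next
  case (2 i)
  then show ?case by auto
next
  case (3 i t ts)
  have ne: "contour t \<noteq> []" "hd (contour t) = []" "last (contour t) = []" using contour_props(1) by auto
  have eq: "[] # contour_list i (t # ts) = [[]] @ map (Cons i) (contour t) @ ([] # contour_list (Suc i) ts)"
    by simp
  have A: "adjs ([] # contour_list i (t # ts)) = {([], [i])} \<union> adjs (map (Cons i) (contour t)) \<union> {([i], [])} \<union> adjs ([] # contour_list (Suc i) ts)"
    unfolding eq using ne
    by (subst adjs_append; simp add: adjs_append hd_map last_map) auto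
  show ?case
  proof (intro allI impI)
    fix p k assume "p @ [k] \<in> set (paths_list i (t # ts))"
    then consider "p @ [k] \<in> set (map (Cons i) (paths t))" | "p @ [k] \<in> set (paths_list (Suc i) ts)" by auto
    then show "(p, p @ [k]) \<in> adjs ([] # contour_list i (t # ts)) \<and> (p @ [k], p) \<in> adjs ([] # contour_list i (t # ts))"
    proof cases
      case 1
      then obtain z where z: "z \<in> set (paths t)" "p @ [k] = i # z" by auto
      show ?thesis
      proof (cases p)
        case Nil then show ?thesis using z A by auto
      next
        case (Cons a p')
        then have "a = i" "z = p' @ [k]" using z by auto
        then have "(p', p' @ [k]) \<in> adjs (contour t) \<and> (p' @ [k], p') \<in> adjs (contour t)"
          using 3(1) z by blast
        then have "(i # p', i # (p' @ [k])) \<in> (\<lambda>(x,y). (i # x, i # y)) ` adjs (contour t)"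
          "(i # (p' @ [k]), i # p') \<in> (\<lambda>(x,y). (i # x, i # y)) ` adjs (contour t)"
          by (force, force)
        then show ?thesis using A Cons \<open>a = i\<close> by (auto simp: adjs_map)
      qed
    next
      case 2 then show ?thesis using 3(2) A by blast
    qed
  qed
qed

lemma paths_prefix:
  "\<forall>p q. p @ q \<in> set (paths t) \<longrightarrow> p \<in> set (paths t)"
  "\<forall>p q. p @ q \<in> set (paths_list i ts) \<longrightarrow> p \<noteq> [] \<longrightarrow> p \<in> set (paths_list i ts)"
proof (induction t and i ts rule: paths_paths_list.induct)
  case (1 ts)
  show ?case
  proof (intro allI impI)
    fix p q assume "p @ q \<in> set (paths (Node ts))"
    then show "p \<in> set (paths (Node ts))" using 1 by (cases "p = []") auto
  qed
next
  case (2 i)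
  then show ?case by simp
next
  case (3 i t ts)
  show ?case
  proof (intro allI impI)
    fix p q assume h: "p @ q \<in> set (paths_list i (t # ts))" "p \<noteq> []"
    then obtain a p' where p: "p = a # p'" by (cases p) auto
    from h consider "p @ q \<in> set (map (Cons i) (paths t))" | "p @ q \<in> set (paths_list (Suc i) ts)" by auto
    then show "p \<in> set (paths_list i (t # ts))"
    proof cases
      case 1 then have "a = i" "p' @ q \<in> set (paths t)" using p by auto
      then show ?thesis using 3(1) p by auto
    next
      case 2 then show ?thesis using 3(2) h by auto
    qed
  qed
qed

lemma smap_fromN: "smap f (fromN a) = f a ## smap f (fromN (Suc a))"
  by (subst siterate.ctr) simp

lemma flat_idx_gen:
  assumes ne: "\<And>m. f m \<noteq> []"
  shows "j < length (f (a + n)) \<Longrightarrow>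
    flat (smap f (fromN a)) !! ((\<Sum>m<n. length (f (a + m))) + j) = f (a + n) ! j"
proof (induction n arbitrary: a)
  case 0 then show ?case using ne[of a] by (subst smap_fromN) simp
next
  case (Suc n)
  have IH: "flat (smap f (fromN (Suc a))) !! ((\<Sum>m<n. length (f (Suc a + m))) + j) = f (Suc a + n) ! j"
    using Suc.IH[of "Suc a"] Suc.prems by simp
  have s: "(\<Sum>m<Suc n. length (f (a + m))) = length (f a) + (\<Sum>m<n. length (f (Suc a + m)))"
    by (subst sum.lessThan_Suc_shift) simp
  have e: "flat (smap f (fromN a)) = f a @- flat (smap f (fromN (Suc a)))"
    by (subst smap_fromN) (simp add: ne)
  have "flat (smap f (fromN a)) !! (length (f a) + ((\<Sum>m<n. length (f (Suc a + m))) + j)) = f (Suc a + n) ! j"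
    unfolding e using IH by simp
  then show ?case unfolding s by (simp add: add.assoc)
qed

definition off :: "(nat \<Rightarrow> 'a list) \<Rightarrow> nat \<Rightarrow> nat" where
  "off f n = (\<Sum>m<n. length (f m))"

lemma flat_idx:
  assumes ne: "\<And>m. f m \<noteq> []" and "j < length (f n)"
  shows "flat (smap f nats) !! (off f n + j) = f n ! j"
  using flat_idx_gen[of f j 0 n] assms by (simp add: off_def)

lemma off_decomp:
  assumes ne: "\<And>m. f m \<noteq> []"
  shows "\<exists>n j. k = off f n + j \<and> j < length (f n)"
proof (induction k)
  case 0 show ?case using ne[of 0] by (intro exI[of _ 0]) (auto simp: off_def)
next
  case (Suc k)
  then obtain n j where h: "k = off f n + j" "j < length (f n)" by blast
  show ?case
  proof (cases "Suc j < length (f n)")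
    case True then show ?thesis using h by (intro exI[of _ n] exI[of _ "Suc j"]) auto
  next
    case False
    then have "Suc k = off f (Suc n) + 0" using h by (simp add: off_def)
    then show ?thesis using ne[of "Suc n"] by blast
  qed
qed

lemma flat_consec:
  assumes ne: "\<And>m. f m \<noteq> []"
    and blk: "\<And>n x y. (x, y) \<in> adjs (f n) \<Longrightarrow> P x y"
    and jn: "\<And>n. P (last (f n)) (hd (f (Suc n)))"
  shows "P (flat (smap f nats) !! k) (flat (smap f nats) !! Suc k)"
proof -
  obtain n j where h: "k = off f n + j" "j < length (f n)" using off_decomp[of f, OF ne] by blast
  show ?thesis
  proof (cases "Suc j < length (f n)")
    case True
    have "flat (smap f nats) !! k = f n ! j" using h flat_idx[of f, OF ne] by simp
    moreover have "flat (smap f nats) !! Suc k = f n ! Suc j" using h flat_idx[of f, OF ne True] by simp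
    moreover have "(f n ! j, f n ! Suc j) \<in> adjs (f n)" unfolding adjs_nth using True by blast
    ultimately show ?thesis using blk by simp
  next
    case False
    then have j: "j = length (f n) - 1" using h by simp
    have "flat (smap f nats) !! k = f n ! j" using h flat_idx[of f, OF ne, of j n] by simp
    then have "flat (smap f nats) !! k = last (f n)" using ne[of n] j by (simp add: last_conv_nth)
    moreover have "Suc k = off f (Suc n) + 0" using h j ne[of n] by (simp add: off_def)
    then have "flat (smap f nats) !! Suc k = hd (f (Suc n))"
      using flat_idx[of f, OF ne, of 0 "Suc n"] ne[of "Suc n"] by (simp add: hd_conv_nth)
    ultimately show ?thesis using jn by simp
  qed
qed

lemma flat_blk_pair:
  assumes ne: "\<And>m. f m \<noteq> []" and "(x, y) \<in> adjs (f n)"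
  shows "\<exists>k. flat (smap f nats) !! k = x \<and> flat (smap f nats) !! Suc k = y"
proof -
  obtain j where j: "Suc j < length (f n)" "f n ! j = x" "f n ! Suc j = y" using assms(2) unfolding adjs_nth by blast
  show ?thesis using flat_idx[of f, OF ne, of j n] flat_idx[of f, OF ne, of "Suc j" n] j
    by (intro exI[of _ "off f n + j"]) simp
qed

lemma flat_jn_pair:
  assumes ne: "\<And>m. f m \<noteq> []"
  shows "\<exists>k. flat (smap f nats) !! k = last (f n) \<and> flat (smap f nats) !! Suc k = hd (f (Suc n))"
proof -
  have a: "flat (smap f nats) !! (off f n + (length (f n) - 1)) = last (f n)"
    using flat_idx[of f, OF ne, of "length (f n) - 1" n] ne[of n] by (simp add: last_conv_nth)
  have "Suc (off f n + (length (f n) - 1)) = off f (Suc n) + 0" using ne[of n] by (simp add: off_def)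
  then have b: "flat (smap f nats) !! Suc (off f n + (length (f n) - 1)) = hd (f (Suc n))"
    using flat_idx[of f, OF ne, of 0 "Suc n"] ne[of "Suc n"] by (simp add: hd_conv_nth)
  show ?thesis using a b by blast
qed



definition fL :: "(nat \<Rightarrow> ptree) \<Rightarrow> nat \<Rightarrow> vtx list" where
  "fL L n = map (embed n True) (contour (L n))"
definition fR :: "(nat \<Rightarrow> ptree) \<Rightarrow> nat \<Rightarrow> vtx list" where
  "fR R n = map (embed n False) (rev (contour (R n)))"
definition RS :: "(nat \<Rightarrow> ptree) \<Rightarrow> vtx stream" where
  "RS R = flat (smap (fR R) nats)"
definition tadj :: "(nat \<Rightarrow> ptree) \<Rightarrow> (nat \<Rightarrow> ptree) \<Rightarrow> vtx \<Rightarrow> vtx \<Rightarrow> bool" where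
  "tadj L R x y \<longleftrightarrow> tedge L R x y \<or> tedge L R y x"

lemma leftc_eq: "leftc L = flat (smap (fL L) nats)"
  unfolding leftc_def fL_def ..
lemma rightc_eq: "rightc R = stl (RS R)"
  unfolding rightc_def RS_def fR_def ..

lemma embed_nil[simp]: "embed n s [] = Spine n" by (simp add: embed_def)
lemma embed_cons[simp]: "embed n s (a # p) = Off n s (a # p)" by (simp add: embed_def)
lemma embed_snoc[simp]: "embed n s (p @ [a]) = Off n s (p @ [a])" by (simp add: embed_def)

lemma fL_ne: "fL L m \<noteq> []" using contour_props(1) by (simp add: fL_def)
lemma fR_ne: "fR R m \<noteq> []" using contour_props(1) by (simp add: fR_def)
lemma fL_hd_last: "hd (fL L n) = Spine n" "last (fL L n) = Spine n"
  using contour_props(1)[of "L n"] by (auto simp: fL_def hd_map last_map)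
lemma fR_hd_last: "hd (fR R n) = Spine n" "last (fR R n) = Spine n"
  using contour_props(1)[of "R n"] by (auto simp: fR_def hd_map last_map hd_rev last_rev)

lemma tadj_sym: "tadj L R x y \<Longrightarrow> tadj L R y x" by (auto simp: tadj_def)

lemma tedge_spine: "tedge L R (Spine n) (Spine (Suc n))" by (auto simp: tedge_def)

lemma tadj_spine: "tadj L R (Spine n) (Spine (Suc n))" by (simp add: tadj_def tedge_spine)

lemma blk_adj_L: "(x, y) \<in> adjs (fL L n) \<Longrightarrow> tadj L R x y"
proof -
  assume "(x, y) \<in> adjs (fL L n)"
  then obtain x' y' where h: "(x', y') \<in> adjs (contour (L n))" "x = embed n True x'" "y = embed n True y'"
    by (auto simp: fL_def adjs_map)
  from bspec[OF contour_adj(1)[of "L n"] h(1)] consider k where "y' = x' @ [k]" "y' \<in> set (paths (L n))"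
    | k where "x' = y' @ [k]" "x' \<in> set (paths (L n))" by blast
  then show ?thesis
  proof cases
    case 1 then have "tedge L R x y" unfolding tedge_def using h by (auto simp: graft_def)
    then show ?thesis by (simp add: tadj_def)
  next
    case 2 then have "tedge L R y x" unfolding tedge_def using h by (auto simp: graft_def)
    then show ?thesis by (simp add: tadj_def)
  qed
qed

lemma blk_adj_R: "(x, y) \<in> adjs (fR R n) \<Longrightarrow> tadj L R x y"
proof -
  assume "(x, y) \<in> adjs (fR R n)"
  then obtain x' y' where h: "(y', x') \<in> adjs (contour (R n))" "x = embed n False x'" "y = embed n False y'"
    by (auto simp: fR_def adjs_map adjs_rev)
  from bspec[OF contour_adj(1)[of "R n"] h(1)] consider k where "x' = y' @ [k]" "x' \<in> set (paths (R n))"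
    | k where "y' = x' @ [k]" "y' \<in> set (paths (R n))" by blast
  then show ?thesis
  proof cases
    case 1 then have "tedge L R y x" unfolding tedge_def using h by (auto simp: graft_def)
    then show ?thesis by (simp add: tadj_def)
  next
    case 2 then have "tedge L R x y" unfolding tedge_def using h by (auto simp: graft_def)
    then show ?thesis by (simp add: tadj_def)
  qed
qed

lemma LS_consec: "tadj L R (leftc L !! k) (leftc L !! Suc k)"
  unfolding leftc_eq
  by (rule flat_consec[of "fL L"]) (auto simp: fL_ne fL_hd_last tadj_spine intro: blk_adj_L)

lemma RS_consec: "tadj L R (RS R !! k) (RS R !! Suc k)"
  unfolding RS_def
  by (rule flat_consec[of "fR R"]) (auto simp: fR_ne fR_hd_last tadj_spine intro: blk_adj_R)

lemma LS_0: "leftc L !! 0 = Spine 0"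
  using flat_idx[of "fL L" 0 0] fL_ne fL_hd_last[of L 0] by (simp add: leftc_eq off_def hd_conv_nth fL_ne)
lemma RS_0: "RS R !! 0 = Spine 0"
  using flat_idx[of "fR R" 0 0] fR_ne fR_hd_last[of R 0] by (simp add: RS_def off_def hd_conv_nth fR_ne)

lemma corner_pos: "corner L R (int k) = leftc L !! k"
  by (simp add: corner_def)
lemma corner_neg: "corner L R (- int k) = RS R !! k"
proof (cases k)
  case 0
  have "corner L R 0 = leftc L !! 0" by (simp add: corner_def)
  then show ?thesis using 0 LS_0[of L] RS_0[of R] by simp
next
  case (Suc m) then show ?thesis by (simp add: corner_def rightc_eq)
qed

lemma corner_consec: "tadj L R (corner L R i) (corner L R (i + 1))"
proof (cases "0 \<le> i")
  case True
  then obtain k where "i = int k" using nonneg_int_cases by blast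
  then show ?thesis using LS_consec[of L R k] corner_pos[of L R] by (metis of_nat_Suc add.commute)
next
  case False
  then obtain k where k: "i = - int (Suc k)" proof -
    have "i = - int (Suc (nat (- i - 1)))" using False by simp
    then show ?thesis using that by blast
  qed
  then have "i + 1 = - int k" by simp
  then show ?thesis using RS_consec[of L R k] corner_neg[of L R] k tadj_sym by metis
qed


lemma adj_fL: "(a, b) \<in> adjs (contour (L n)) \<Longrightarrow> (embed n True a, embed n True b) \<in> adjs (fL L n)"
  unfolding fL_def adjs_map by force
lemma adj_fR: "(a, b) \<in> adjs (contour (R n)) \<Longrightarrow> (embed n False b, embed n False a) \<in> adjs (fR R n)"
  unfolding fR_def adjs_map adjs_rev by force

lemma LS_pair: "leftc L !! k = x \<Longrightarrow> leftc L !! Suc k = y \<Longrightarrow>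
   corner L R (int k) = x \<and> corner L R (int k + 1) = y"
  using corner_pos[of L R k] corner_pos[of L R "Suc k"] by (simp add: add.commute)

lemma RS_pair: "RS R !! k = x \<Longrightarrow> RS R !! Suc k = y \<Longrightarrow>
   corner L R (- int (Suc k)) = y \<and> corner L R (- int (Suc k) + 1) = x"
proof -
  assume a: "RS R !! k = x" "RS R !! Suc k = y"
  have "- int (Suc k) + 1 = - int k" by simp
  then show ?thesis using corner_neg[of L R k] corner_neg[of L R "Suc k"] a by simp
qed

lemma trav: "tedge L R u w \<Longrightarrow>
  (\<exists>d. corner L R d = u \<and> corner L R (d + 1) = w) \<and> (\<exists>e. corner L R e = w \<and> corner L R (e + 1) = u)"
proof -
  assume "tedge L R u w"
  then consider n where "u = Spine n" "w = Spine (Suc n)"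
    | n s p i where "u = embed n s p" "w = Off n s (p @ [i])" "p @ [i] \<in> set (paths (graft L R n s))"
    unfolding tedge_def by blast
  then show ?thesis
  proof cases
    case 1
    obtain k where k: "leftc L !! k = Spine n" "leftc L !! Suc k = Spine (Suc n)"
      using flat_jn_pair[of "fL L" n] fL_ne fL_hd_last unfolding leftc_eq by metis
    obtain k' where k': "RS R !! k' = Spine n" "RS R !! Suc k' = Spine (Suc n)"
      using flat_jn_pair[of "fR R" n] fR_ne fR_hd_last unfolding RS_def by metis
    show ?thesis using LS_pair[OF k, of R] RS_pair[OF k', of L] 1 by blast
  next
    case 2
    have tr: "(p, p @ [i]) \<in> adjs (contour (graft L R n s))" "(p @ [i], p) \<in> adjs (contour (graft L R n s))"
      using contour_trav(1)[of "graft L R n s"] 2(3) by auto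
    show ?thesis
    proof (cases s)
      case True
      then have "(u, w) \<in> adjs (fL L n)" "(w, u) \<in> adjs (fL L n)"
        using adj_fL[of p "p @ [i]" L n] adj_fL[of "p @ [i]" p L n] tr 2 by (auto simp: graft_def)
      then obtain k k' where "leftc L !! k = u" "leftc L !! Suc k = w" "leftc L !! k' = w" "leftc L !! Suc k' = u"
        using flat_blk_pair[of "fL L"] fL_ne unfolding leftc_eq by metis
      then show ?thesis using LS_pair[of L _ _ _ R] by metis
    next
      case False
      then have "(u, w) \<in> adjs (fR R n)" "(w, u) \<in> adjs (fR R n)"
        using adj_fR[of p "p @ [i]" R n] adj_fR[of "p @ [i]" p R n] tr 2 by (auto simp: graft_def)
      then obtain k k' where "RS R !! k = u" "RS R !! Suc k = w" "RS R !! k' = w" "RS R !! Suc k' = u"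
        using flat_blk_pair[of "fR R"] fR_ne unfolding RS_def by metis
      then show ?thesis using RS_pair[of R _ _ _ L] by metis
    qed
  qed
qed

lemma snoc_prefix: "(\<exists>t. xs @ [a] = q @ t) \<longleftrightarrow> (\<exists>t. xs = q @ t) \<or> q = xs @ [a]"
proof
  assume "\<exists>t. xs @ [a] = q @ t"
  then obtain t where t: "xs @ [a] = q @ t" by blast
  show "(\<exists>t. xs = q @ t) \<or> q = xs @ [a]"
  proof (cases t rule: rev_cases)
    case Nil then show ?thesis using t by simp
  next
    case (snoc t' b) then show ?thesis using t by auto
  qed
qed auto

lemma geod_tedge: "tedge L R x y \<Longrightarrow> geod y = insert y (geod x)"
proof -
  assume "tedge L R x y"
  then consider n where "x = Spine n" "y = Spine (Suc n)"
    | n s p i where "x = embed n s p" "y = Off n s (p @ [i])"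
    unfolding tedge_def by blast
  then show ?thesis
  proof cases
    case 1 then show ?thesis by (auto simp: geod_def le_Suc_eq)
  next
    case 2
    have e: "{embed n s q |q. \<exists>t. p @ [i] = q @ t} = insert y {embed n s q |q. \<exists>t. p = q @ t}"
    proof (rule set_eqI)
      fix z
      show "z \<in> {embed n s q |q. \<exists>t. p @ [i] = q @ t} \<longleftrightarrow> z \<in> insert y {embed n s q |q. \<exists>t. p = q @ t}"
        unfolding snoc_prefix
      proof
        assume "z \<in> {embed n s q |q. (\<exists>t. p = q @ t) \<or> q = p @ [i]}"
        then obtain q where "z = embed n s q" "(\<exists>t. p = q @ t) \<or> q = p @ [i]" by blast
        then show "z \<in> insert y {embed n s q |q. \<exists>t. p = q @ t}" using 2 by auto
      next
        assume "z \<in> insert y {embed n s q |q. \<exists>t. p = q @ t}"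
        then consider "z = embed n s (p @ [i])" | q where "z = embed n s q" "\<exists>t. p = q @ t" using 2 by auto
        then show "z \<in> {embed n s q |q. (\<exists>t. p = q @ t) \<or> q = p @ [i]}" by cases blast+
      qed
    qed
    show ?thesis
    proof (cases "p = []")
      case True
      then have "{embed n s q |q. \<exists>t. p = q @ t} = {Spine n}" by auto
      then show ?thesis using 2 True e by (auto simp: geod_def)
    next
      case False
      then obtain a p' where "p = a # p'" by (cases p) auto
      then show ?thesis using 2 e by (auto simp: geod_def)
    qed
  qed
qed

fun dep :: "vtx \<Rightarrow> nat" where
  "dep (Spine n) = n"
| "dep (Off n s p) = n + length p"

lemma dep_embed: "dep (embed n s p) = n + length p"
  by (cases p) auto

lemma geod_dep: "z \<in> geod v \<Longrightarrow> dep z \<le> dep v"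
  by (cases v) (auto simp: geod_def dep_embed)

lemma tedge_dep: "tedge L R x y \<Longrightarrow> dep y = Suc (dep x)"
  unfolding tedge_def by (auto simp: dep_embed)

lemma geod_self: "v \<in> verts L R \<Longrightarrow> v \<in> geod v"
  unfolding verts_def geod_def
proof (auto, goal_cases)
  case (1 n s p)
  then show ?case by (intro exI[of _ p]) (auto simp: embed_def)
qed

lemma geod_Spine0: "geod (Spine 0) = {Spine 0}"
  by (auto simp: geod_def)

lemma tedge_verts: "tedge L R x y \<Longrightarrow> x \<in> verts L R \<and> y \<in> verts L R"
proof -
  assume "tedge L R x y"
  then consider n where "x = Spine n" "y = Spine (Suc n)"
    | n s p i where "x = embed n s p" "y = Off n s (p @ [i])" "p @ [i] \<in> set (paths (graft L R n s))"
    unfolding tedge_def by blast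
  then show ?thesis
  proof cases
    case 1 then show ?thesis by (auto simp: verts_def)
  next
    case 2
    have "p \<in> set (paths (graft L R n s))" using paths_prefix(1)[of "graft L R n s"] 2(3) by blast
    have "x \<in> verts L R"
    proof (cases p)
      case Nil then show ?thesis using 2 by (simp add: verts_def)
    next
      case (Cons a p') then show ?thesis using 2 \<open>p \<in> set (paths (graft L R n s))\<close> unfolding verts_def by auto
    qed
    moreover have "y \<in> verts L R" using 2 unfolding verts_def by auto
    ultimately show ?thesis by blast
  qed
qed

lemma parent: "v \<in> verts L R \<Longrightarrow> v \<noteq> Spine 0 \<Longrightarrow> \<exists>w. tedge L R w v"
proof -
  assume v: "v \<in> verts L R" "v \<noteq> Spine 0"
  then consider n where "v = Spine (Suc n)" | n s p where "v = Off n s p" "p \<noteq> []" "p \<in> set (paths (graft L R n s))"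
    unfolding verts_def by (auto, metis not0_implies_Suc)
  then show ?thesis
  proof cases
    case 1 then show ?thesis using tedge_spine by blast
  next
    case 2
    then obtain p' i where "p = p' @ [i]" by (cases p rule: rev_cases) auto
    then have "tedge L R (embed n s p') v" using 2 unfolding tedge_def by blast
    then show ?thesis by blast
  qed
qed


locale setting =
  fixes L R :: "nat \<Rightarrow> ptree" and lab :: "vtx \<Rightarrow> int"
  assumes edge_labels: "\<And>u w. tedge L R u w \<Longrightarrow> lab w - lab u \<in> {-1, 0, 1}"
    and left_unbounded: "\<And>m. \<exists>k. lab (leftc L !! k) < m"
begin

abbreviation cc where "cc \<equiv> corner L R"
abbreviation sc where "sc \<equiv> succ L R lab"

lemma tadj_lab: "tadj L R x y \<Longrightarrow> \<bar>lab x - lab y\<bar> \<le> 1"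
  unfolding tadj_def using edge_labels by fastforce

lemma step: "\<bar>lab (cc (i + 1)) - lab (cc i)\<bar> \<le> 1"
  using tadj_lab[OF corner_consec[of L R i]] by simp

lemma low: "\<exists>j>i. lab (cc j) < lab (cc i)"
proof -
  define m where "m = min (lab (cc i)) (Min ((\<lambda>k. lab (leftc L !! k)) ` {..nat i}))"
  obtain k where k: "lab (leftc L !! k) < m" using left_unbounded by blast
  have "k > nat i"
  proof (rule ccontr)
    assume "\<not> k > nat i"
    then have "Min ((\<lambda>k. lab (leftc L !! k)) ` {..nat i}) \<le> lab (leftc L !! k)" by (intro Min_le) auto
    then show False using k unfolding m_def by linarith
  qed
  moreover have "lab (cc (int k)) < lab (cc i)" using k corner_pos[of L R k] unfolding m_def by simp
  ultimately show ?thesis by (intro exI[of _ "int k"]) auto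
qed

lemma succ_prop: "i < sc i \<and> lab (cc (sc i)) = lab (cc i) - 1 \<and> (\<forall>k. i \<le> k \<and> k < sc i \<longrightarrow> lab (cc k) \<ge> lab (cc i))"
proof -
  obtain j where j: "j > i" "lab (cc j) < lab (cc i)" using low by blast
  define Q where "Q n \<longleftrightarrow> lab (cc (i + int (Suc n))) < lab (cc i)" for n
  have "Q (nat (j - i) - 1)" unfolding Q_def using j by (simp add: of_nat_diff)
  then have Qn0: "Q (LEAST n. Q n)" by (rule LeastI)
  define n0 where "n0 = (LEAST n. Q n)"
  define sv where "sv = i + int (Suc n0)"
  have mid: "lab (cc (i + int m)) \<ge> lab (cc i)" if "m \<le> n0" for m
  proof (cases m)
    case 0 then show ?thesis by simp
  next
    case (Suc m')
    then have "\<not> Q m'" using that not_less_Least[of m' Q] unfolding n0_def by simp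
    then show ?thesis unfolding Q_def Suc by simp
  qed
  have mid2: "lab (cc k) \<ge> lab (cc i)" if "i \<le> k" "k < sv" for k
  proof -
    have "k = i + int (nat (k - i))" "nat (k - i) \<le> n0" using that unfolding sv_def by auto
    then show ?thesis using mid by metis
  qed
  have "lab (cc sv) < lab (cc i)" using Qn0 unfolding Q_def sv_def n0_def by simp
  moreover have "lab (cc sv) \<ge> lab (cc (i + int n0)) - 1"
  proof -
    have "lab (cc (i + int n0 + 1)) \<ge> lab (cc (i + int n0)) - 1" using step[of "i + int n0"] by (simp only: abs_le_iff) linarith
    moreover have "i + int n0 + 1 = sv" by (simp add: sv_def)
    ultimately show ?thesis by simp
  qed
  ultimately have lv: "lab (cc sv) = lab (cc i) - 1" using mid[of n0] by simp
  have "sc i = sv" unfolding succ_def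
  proof (rule Least_equality)
    show "i < sv \<and> lab (cc sv) = lab (cc i) - 1" using lv unfolding sv_def by simp
  next
    fix y assume "i < y \<and> lab (cc y) = lab (cc i) - 1"
    then show "sv \<le> y" using mid2[of y] by (cases "y < sv") auto
  qed
  then show ?thesis using lv mid2 unfolding sv_def by auto
qed

lemma walk:
  assumes "i \<le> j"
  shows "geod (cc j) \<subseteq> geod (cc i) \<union> cc ` {i<..j} \<and> geod (cc i) \<subseteq> geod (cc j) \<union> cc ` {i..<j}"
proof -
  have "\<forall>m. geod (cc (i + int m)) \<subseteq> geod (cc i) \<union> cc ` {i<..i + int m} \<and> geod (cc i) \<subseteq> geod (cc (i + int m)) \<union> cc ` {i..<i + int m}"
  proof
    fix m show "geod (cc (i + int m)) \<subseteq> geod (cc i) \<union> cc ` {i<..i + int m} \<and> geod (cc i) \<subseteq> geod (cc (i + int m)) \<union> cc ` {i..<i + int m}"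
    proof (induction m)
      case 0 then show ?case by simp
    next
      case (Suc m)
      let ?k = "i + int m"
      have e: "i + int (Suc m) = ?k + 1" by simp
      have t: "tadj L R (cc ?k) (cc (?k + 1))" by (rule corner_consec)
      have A: "geod (cc (?k + 1)) \<subseteq> insert (cc (?k + 1)) (geod (cc ?k))"
        "geod (cc ?k) \<subseteq> insert (cc ?k) (geod (cc (?k + 1)))"
        using t geod_tedge[of L R "cc ?k" "cc (?k + 1)"] geod_tedge[of L R "cc (?k + 1)" "cc ?k"]
        unfolding tadj_def by auto
      have B: "cc ` {i<..?k} \<subseteq> cc ` {i<..?k + 1}" "cc (?k + 1) \<in> cc ` {i<..?k + 1}"
        "cc ` {i..<?k} \<subseteq> cc ` {i..<?k + 1}" "cc ?k \<in> cc ` {i..<?k + 1}" by auto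
      show ?case unfolding e using Suc A B by blast
    qed
  qed
  then show ?thesis using assms by (metis le_add_diff_inverse nonneg_int_cases diff_ge_0_iff_ge)
qed

lemma hat_sym: "hatQadj L R lab u w \<Longrightarrow> hatQadj L R lab w u"
  unfolding hatQadj_def Qadj_def added_edge_def by (auto simp: insert_commute split: prod.splits)


lemma sc_lab: "lab (cc (sc x)) = lab (cc x) - 1"
  using succ_prop by blast

lemma added_edge_simp: "added_edge lab (v1, v2, v3, v4) u w \<longleftrightarrow>
  ((lab v2 = lab v1 + 1 \<and> lab v3 = lab v1 \<and> lab v4 = lab v1 + 1 \<and> {u, w} = {v2, v4}) \<or>
   (lab v2 = lab v1 - 1 \<and> lab v3 = lab v1 \<and> lab v4 = lab v1 - 1 \<and> {u, w} = {v1, v3}))"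
  unfolding added_edge_def prod.case
proof (rule iffI)
  assume "\<exists>l. lab v1 = l \<and> lab v2 = l + 1 \<and> lab v3 = l \<and> lab v4 = l + 1 \<and> {u, w} = {v2, v4} \<or>
        lab v1 = l + 1 \<and> lab v2 = l \<and> lab v3 = l + 1 \<and> lab v4 = l \<and> {u, w} = {v1, v3}"
  then obtain l where "lab v1 = l \<and> lab v2 = l + 1 \<and> lab v3 = l \<and> lab v4 = l + 1 \<and> {u, w} = {v2, v4} \<or>
        lab v1 = l + 1 \<and> lab v2 = l \<and> lab v3 = l + 1 \<and> lab v4 = l \<and> {u, w} = {v1, v3}" by blast
  then show "(lab v2 = lab v1 + 1 \<and> lab v3 = lab v1 \<and> lab v4 = lab v1 + 1 \<and> {u, w} = {v2, v4}) \<or>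
   (lab v2 = lab v1 - 1 \<and> lab v3 = lab v1 \<and> lab v4 = lab v1 - 1 \<and> {u, w} = {v1, v3})"
    by (elim disjE conjE) simp_all
next
  assume "(lab v2 = lab v1 + 1 \<and> lab v3 = lab v1 \<and> lab v4 = lab v1 + 1 \<and> {u, w} = {v2, v4}) \<or>
   (lab v2 = lab v1 - 1 \<and> lab v3 = lab v1 \<and> lab v4 = lab v1 - 1 \<and> {u, w} = {v1, v3})"
  then show "\<exists>l. lab v1 = l \<and> lab v2 = l + 1 \<and> lab v3 = l \<and> lab v4 = l + 1 \<and> {u, w} = {v2, v4} \<or>
        lab v1 = l + 1 \<and> lab v2 = l \<and> lab v3 = l + 1 \<and> lab v4 = l \<and> {u, w} = {v1, v3}"
  proof (elim disjE conjE)
    assume "lab v2 = lab v1 + 1" "lab v3 = lab v1" "lab v4 = lab v1 + 1" "{u, w} = {v2, v4}"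
    then show ?thesis by (intro exI[of _ "lab v1"]) simp
  next
    assume "lab v2 = lab v1 - 1" "lab v3 = lab v1" "lab v4 = lab v1 - 1" "{u, w} = {v1, v3}"
    then show ?thesis by (intro exI[of _ "lab v1 - 1"]) simp
  qed
qed

lemma doubleton_tadj: "{u, w} = {x, y} \<Longrightarrow> tadj L R x y \<Longrightarrow> tadj L R u w"
  unfolding doubleton_eq_iff using tadj_sym by blast

lemma hat_cases:
  assumes "hatQadj L R lab u w"
  shows "(\<exists>i. u = cc i \<and> w = cc (sc i)) \<or> (\<exists>i. w = cc i \<and> u = cc (sc i)) \<or> (tadj L R u w \<and> lab u = lab w)"
proof (cases "Qadj L R lab u w")
  case True then show ?thesis unfolding Qadj_def by blast
next
  case False
  then obtain f where f: "is_face L R lab f" "added_edge lab f u w" using assms unfolding hatQadj_def by blast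
  then obtain p q where pq: "p < q" "cc (p + 1) = cc q" "cc (q + 1) = cc p"
    "tadj L R (cc p) (cc (p + 1))" "f = face L R lab p q"
    unfolding is_face_def tadj_def by blast
  define a where "a = lab (cc p)"
  define b where "b = lab (cc (p + 1))"
  have l: "lab (cc (sc p)) = a - 1" "lab (cc (sc (p + 1))) = b - 1" "lab (cc (sc q)) = b - 1"
    "lab (cc (sc (q + 1))) = a - 1" "lab (cc q) = b" "lab (cc (q + 1)) = a"
    using sc_lab pq unfolding a_def b_def by metis+
  have la: "lab (cc p) = a" "lab (cc (p + 1)) = b" unfolding a_def b_def by simp_all
  consider "a = b" | "a \<noteq> b" "b = a + 1" | "a \<noteq> b" "b \<noteq> a + 1" by blast
  then show ?thesis
  proof cases
    case 1
    then have "f = (cc p, cc (sc p), cc (p + 1), cc (sc q))" using pq(5) unfolding face_def Let_def a_def b_def by simp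
    then have "{u, w} = {cc p, cc (p + 1)}" using f(2) l 1 la by (simp add: added_edge_simp)
    then have "tadj L R u w" "lab u = lab w" using pq(4) 1 doubleton_tadj unfolding a_def b_def doubleton_eq_iff by auto
    then show ?thesis by blast
  next
    case 2
    then have "f = (cc p, cc (sc p), cc (sc (p + 1)), cc (p + 1))" using pq(5) unfolding face_def Let_def a_def b_def by simp
    then have False using f(2) l 2 la by (simp add: added_edge_simp)
    then show ?thesis ..
  next
    case 3
    then have "f = (cc (q + 1), cc (sc (q + 1)), cc (sc q), cc q)" using pq(5) unfolding face_def Let_def a_def b_def by simp
    then have False using f(2) l 3 la pq(2,3) by (simp add: added_edge_simp)
    then show ?thesis ..
  qed
qed

lemma sc_next: "lab (cc (d + 1)) = lab (cc d) - 1 \<Longrightarrow> sc d = d + 1"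
  unfolding succ_def by (rule Least_equality) auto

lemma tree_hat:
  assumes t: "tedge L R x y"
  shows "hatQadj L R lab x y"
proof -
  obtain d e where de: "cc d = x" "cc (d + 1) = y" "cc e = y" "cc (e + 1) = x" using trav[OF t] by blast
  have xy: "x \<noteq> y" using tedge_dep[OF t] by auto
  have "lab y - lab x \<in> {-1, 0, 1}" using edge_labels[OF t] .
  then consider "lab y = lab x - 1" | "lab y = lab x + 1" | "lab y = lab x" by auto
  then show ?thesis
  proof cases
    case 1
    then have "sc d = d + 1" using sc_next de by simp
    then have "Qadj L R lab x y" unfolding Qadj_def using de by metis
    then show ?thesis unfolding hatQadj_def by blast
  next
    case 2
    then have "sc e = e + 1" using sc_next de by simp
    then have "Qadj L R lab x y" unfolding Qadj_def using de by metis
    then show ?thesis unfolding hatQadj_def by blast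
  next
    case 3
    have fc: "is_face L R lab (face L R lab p q) \<and> added_edge lab (face L R lab p q) x y"
      if h: "p < q" "cc (p + 1) = cc q" "cc (q + 1) = cc p" "tedge L R (cc p) (cc (p + 1)) \<or> tedge L R (cc (p + 1)) (cc p)"
        "{cc p, cc (p + 1)} = {x, y}" for p q
    proof
      show "is_face L R lab (face L R lab p q)" unfolding is_face_def using h(1-4) by blast
    next
      have lp: "lab (cc p) = lab (cc (p + 1))" using h(5) 3 unfolding doubleton_eq_iff by auto
      have "face L R lab p q = (cc p, cc (sc p), cc (p + 1), cc (sc q))"
        unfolding face_def Let_def using lp by simp
      moreover have "lab (cc (sc p)) = lab (cc p) - 1" "lab (cc (sc q)) = lab (cc p) - 1"
        using sc_lab[of p] sc_lab[of q] h(2) lp by auto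
      ultimately show "added_edge lab (face L R lab p q) x y"
        using lp h(5) by (simp add: added_edge_simp)
    qed
    have "d \<noteq> e" using de xy by auto
    then consider "d < e" | "e < d" by linarith
    then have "\<exists>f. is_face L R lab f \<and> added_edge lab f x y"
    proof cases
      case 1
      have "is_face L R lab (face L R lab d e) \<and> added_edge lab (face L R lab d e) x y"
        by (rule fc) (use 1 de t in auto)
      then show ?thesis by blast
    next
      case 2
      have "is_face L R lab (face L R lab e d) \<and> added_edge lab (face L R lab e d) x y"
        by (rule fc) (use 2 de t in \<open>auto simp: insert_commute\<close>)
      then show ?thesis by blast
    qed
    then show ?thesis unfolding hatQadj_def by blast
  qed
qed

end

context setting
begin

definition Rel :: "int \<Rightarrow> vtx \<Rightarrow> vtx \<Rightarrow> bool" where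
  "Rel r x y \<longleftrightarrow> hatQadj L R lab x y \<and> x \<in> verts L R \<and> y \<in> verts L R \<and> lab x > - r \<and> lab y > - r"

lemma Fset_iff: "v \<in> Fset L R lab r \<longleftrightarrow> (Rel r)\<^sup>*\<^sup>* (Spine 0) v \<and> v \<in> verts L R \<and> lab v > - r"
proof -
  have "(Rel r) = (\<lambda>x y. hatQadj L R lab x y \<and> x \<in> verts L R \<and> y \<in> verts L R \<and> lab x > - r \<and> lab y > - r)"
    by (intro ext) (simp add: Rel_def)
  then show ?thesis unfolding Fset_def by simp
qed

lemma clo:
  assumes "Rel r x y" "\<forall>z\<in>geod x. lab z > - r"
  shows "\<forall>z\<in>geod y. lab z > - r"
proof -
  have h: "hatQadj L R lab x y" "lab x > - r" "lab y > - r" using assms(1) unfolding Rel_def by auto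
  from hat_cases[OF h(1)] consider i where "x = cc i" "y = cc (sc i)" | i where "y = cc i" "x = cc (sc i)"
    | "tadj L R x y" by blast
  then show ?thesis
  proof cases
    case 1
    have sp: "i < sc i" "\<forall>k. i \<le> k \<and> k < sc i \<longrightarrow> lab (cc k) \<ge> lab (cc i)" using succ_prop[of i] by auto
    have W: "geod y \<subseteq> geod x \<union> cc ` {i<..sc i}" using walk[of i "sc i"] sp 1 by auto
    show ?thesis
    proof
      fix z assume "z \<in> geod y"
      then consider "z \<in> geod x" | k where "z = cc k" "i < k" "k \<le> sc i" using W by auto
      then show "lab z > - r"
      proof cases
        case 1 then show ?thesis using assms(2) by blast
      next
        case 2
        show ?thesis
        proof (cases "k = sc i")
          case True then show ?thesis using 2 h 1 by simp
        next
          case False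
          then have "lab (cc k) \<ge> lab (cc i)" using sp 2 by auto
          then show ?thesis using 2 h 1 by simp
        qed
      qed
    qed
  next
    case 2
    note yi = 2
    have sp: "i < sc i" "\<forall>k. i \<le> k \<and> k < sc i \<longrightarrow> lab (cc k) \<ge> lab (cc i)" using succ_prop[of i] by auto
    have W: "geod y \<subseteq> geod x \<union> cc ` {i..<sc i}" using walk[of i "sc i"] sp 2 by auto
    show ?thesis
    proof
      fix z assume "z \<in> geod y"
      then consider "z \<in> geod x" | k where "z = cc k" "i \<le> k" "k < sc i" using W by auto
      then show "lab z > - r"
      proof cases
        case 1 then show ?thesis using assms(2) by blast
      next
        case k: 2
        then have "lab (cc k) \<ge> lab (cc i)" using sp by auto
        then show ?thesis using k h yi by simp
      qed
    qed
  next
    case 3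
    then have "geod y \<subseteq> insert y (geod x)" using geod_tedge[of L R x y] geod_tedge[of L R y x]
      unfolding tadj_def by auto
    then show ?thesis using assms(2) h by auto
  qed
qed

lemma part1:
  assumes root_label: "lab (Spine 0) = 0" and r_pos: "r > 0" and v: "v \<in> verts L R"
  shows "v \<in> Fset L R lab r \<longleftrightarrow> (\<forall>z\<in>geod v. lab z > - r)"
proof
  assume "v \<in> Fset L R lab r"
  then have "(Rel r)\<^sup>*\<^sup>* (Spine 0) v" unfolding Fset_iff by blast
  then show "\<forall>z\<in>geod v. lab z > - r"
  proof (induction rule: rtranclp_induct)
    case base then show ?case using root_label r_pos by (simp add: geod_Spine0)
  next
    case (step y z) then show ?case using clo by blast
  qed
next
  assume G: "\<forall>z\<in>geod v. lab z > - r"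
  have "(Rel r)\<^sup>*\<^sup>* (Spine 0) v" using v G
  proof (induction "dep v" arbitrary: v rule: less_induct)
    case less
    show ?case
    proof (cases "v = Spine 0")
      case True then show ?thesis by simp
    next
      case False
      then obtain w where t: "tedge L R w v" using parent less.prems by blast
      have wv: "w \<in> verts L R" using tedge_verts[OF t] by blast
      have gv: "geod v = insert v (geod w)" using geod_tedge[OF t] .
      have Gw: "\<forall>z\<in>geod w. lab z > - r" using less.prems gv by blast
      have "dep w < dep v" using tedge_dep[OF t] by simp
      then have IH: "(Rel r)\<^sup>*\<^sup>* (Spine 0) w" using less.hyps wv Gw by blast
      have "w \<in> geod w" using geod_self[OF wv] .
      then have "Rel r w v" unfolding Rel_def using tree_hat[OF t] wv less.prems geod_self gv by auto
      then show ?thesis using IH by (simp add: rtranclp.rtrancl_into_rtrancl)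
    qed
  qed
  then show "v \<in> Fset L R lab r" unfolding Fset_iff using v G geod_self[OF v] by blast
qed

lemma part2:
  assumes root_label: "lab (Spine 0) = 0" and r_pos: "r > 0" and v: "v \<in> verts L R"
  shows "v \<in> bdF L R lab r \<longleftrightarrow> lab v = - r \<and> (\<forall>z\<in>geod v - {v}. lab z > - r)"
proof
  assume "v \<in> bdF L R lab r"
  then obtain w where w: "w \<in> Fset L R lab r" "hatQadj L R lab v w" "lab v \<le> - r"
    unfolding bdF_def by blast
  have wv: "w \<in> verts L R" "lab w > - r" using w(1) unfolding Fset_iff by auto
  have Gw: "\<forall>z\<in>geod w. lab z > - r" using part1[OF root_label r_pos wv(1)] w(1) by blast
  from hat_cases[OF w(2)] consider i where "v = cc i" "w = cc (sc i)" | i where "w = cc i" "v = cc (sc i)"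
    | "tadj L R v w" "lab v = lab w" by blast
  then show "lab v = - r \<and> (\<forall>z\<in>geod v - {v}. lab z > - r)"
  proof cases
    case 1 then show ?thesis using sc_lab[of i] wv w by simp
  next
    case 2
    have sp: "i < sc i" "\<forall>k. i \<le> k \<and> k < sc i \<longrightarrow> lab (cc k) \<ge> lab (cc i)" using succ_prop[of i] by auto
    have lv: "lab v = - r" using sc_lab[of i] 2 wv w by simp
    have W: "geod v \<subseteq> geod w \<union> cc ` {i<..sc i}" using walk[of i "sc i"] sp 2 by auto
    have "\<forall>z\<in>geod v - {v}. lab z > - r"
    proof
      fix z assume z: "z \<in> geod v - {v}"
      then consider "z \<in> geod w" | k where "z = cc k" "i < k" "k \<le> sc i" using W by auto
      then show "lab z > - r"
      proof cases
        case 1 then show ?thesis using Gw by blast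
      next
        case 3: 2
        then have "k \<noteq> sc i" using z 2 by auto
        then have "lab (cc k) \<ge> lab (cc i)" using sp 3 by auto
        then show ?thesis using 3 wv 2 by simp
      qed
    qed
    then show ?thesis using lv by blast
  next
    case 3 then show ?thesis using wv w by simp
  qed
next
  assume h: "lab v = - r \<and> (\<forall>z\<in>geod v - {v}. lab z > - r)"
  have "v \<noteq> Spine 0" using h root_label r_pos by auto
  then obtain w where t: "tedge L R w v" using parent v by blast
  have wv: "w \<in> verts L R" using tedge_verts[OF t] by blast
  have gv: "geod v = insert v (geod w)" using geod_tedge[OF t] .
  have "v \<notin> geod w" using geod_dep[of v w] tedge_dep[OF t] by auto
  then have Gw: "\<forall>z\<in>geod w. lab z > - r" using h gv by auto
  then have "w \<in> Fset L R lab r" using part1[OF root_label r_pos wv] by blast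
  moreover have "hatQadj L R lab v w" using hat_sym[OF tree_hat[OF t]] .
  ultimately show "v \<in> bdF L R lab r" unfolding bdF_def using v h by auto
qed

end

theorem proposition5:
  fixes L R :: "nat \<Rightarrow> ptree" and lab :: "vtx \<Rightarrow> int" and r :: int and v :: vtx
  assumes root_label: "lab (Spine 0) = 0"
    and edge_labels: "\<And>u w. tedge L R u w \<Longrightarrow> lab w - lab u \<in> {-1, 0, 1}"
    and left_unbounded: "\<And>m. \<exists>k. lab (leftc L !! k) < m"
    and r_pos: "r > 0"
    and v_vert: "v \<in> verts L R"
  shows "(v \<in> Fset L R lab r \<longleftrightarrow> (\<forall>v' \<in> geod v. lab v' > - r))
       \<and> (v \<in> bdF L R lab r \<longleftrightarrow> lab v = - r \<and> (\<forall>v' \<in> geod v - {v}. lab v' > - r))"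
proof -
  interpret setting L R lab
    by unfold_locales (use edge_labels left_unbounded in auto)
  show ?thesis using part1[OF root_label r_pos v_vert] part2[OF root_label r_pos v_vert] by blast
qed

end
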